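(* Let $v\equiv u\equiv 2$ or $5\pmod 6$, let $c<\binom u3$, and let $(u,c)$ satisfy (C1) with associated pair $(\lambda,\varepsilon)$. Suppose $(U,\mathcal F)$ is an NWBTS$(u;c)$ and $(V,\mathcal F')$ is a simple GDD$_\lambda(2,3,v)$ of type $1^{v-u}u^1$ with long group $U\subset V$. Then $(V,\mathcal F\cup\mathcal F')$ is an NWBTS$(v;b)$ where $3b=\lambda\binom v2+\varepsilon$.
   Context: A GDD$_\lambda(2,3,v)$ of type $1^{v-u}u^1$ with long group $U$ on a $v$-set $V\supseteq U$, $|U|=u$, is a family of 3-subsets of $V$ such that no block contains two points of $U$ and every pair of points of $V$ not contained in $U$ lies in exactly $\lambda$ blocks; simple means no repeated blocks. A triple system TS$(v;b)$ is a pair $(V,\mathcal F)$, $V$ a set of $v\ge3$ points, $\mathcal F$ a multiset of $b$ 3-subsets (blocks); simple if no repeated block. $\lambda_{x_1,\dots,x_j}$ is the number of blocks containing $\{x_1,\dots,x_j\}$; $j$-balanced means $|\lambda_{x_1,\dots,x_j}-\lambda_{y_1,\dots,y_j}|\le1$ for all $j$-subsets. Associated pair $(\lambda,\varepsilon)$ of $(v,b)$: $3b=\lambda\binom v2+\varepsilon$, $-v/2<\varepsilon<v/2$. (C1): $v\equiv 2\pmod 3$ and $b\in\{\lfloor \lambda v(v-1)/6\rfloor,\lceil \lambda v(v-1)/6\rceil\}$ with $\lambda\equiv1,2\pmod 3$ if $v\equiv5\pmod6$ and $\lambda\equiv 2,4\pmod 6$ if $v\equiv2\pmod 6$ ($\lambda$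 being that of the associated pair; then $\varepsilon\in\{\pm1,\pm2\}$). Defect graph (when all $\lambda_{x,y}\in\{\lambda-1,\lambda,\lambda+1\}$): graph with edges of pairs with $\lambda_{x,y}=\lambda+1$ (label $+1$) or $\lambda-1$ (label $-1$); isomorphisms preserve labels. $G_{\pm1}$: triangle with two $\pm1$ edges and one $\mp1$ edge; $G_{\pm2}$: 4-cycle with three $\pm1$ edges and one $\mp1$ edge. Under (C1), a TS is nearly 2-balanced if all $\lambda_{x,y}\in\{\lambda-1,\lambda,\lambda+1\}$ and its defect graph is isomorphic to $G_\varepsilon$; an NWBTS$(v;b)$ is a nearly 2-balanced 3-balanced TS$(v;b)$. *)

theory Defs
  imports Complex_Main "HOL-Library.Multiset"
begin

definition lam :: "'a set multiset \<Rightarrow> 'a set \<Rightarrow> int" where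
  "lam F S = int (size (filter_mset (\<lambda>B. S \<subseteq> B) F))"

definition TS :: "'a set \<Rightarrow> 'a set multiset \<Rightarrow> bool" where
  "TS V F \<longleftrightarrow> finite V \<and> card V \<ge> 3 \<and> (\<forall>B\<in>#F. B \<subseteq> V \<and> card B = 3)"

definition simple_ms :: "'a set multiset \<Rightarrow> bool" where
  "simple_ms F \<longleftrightarrow> (\<forall>B. count F B \<le> 1)"

definition j_balanced :: "nat \<Rightarrow> 'a set \<Rightarrow> 'a set multiset \<Rightarrow> bool" where
  "j_balanced j V F \<longleftrightarrow> (\<forall>S T. S \<subseteq> V \<longrightarrow> T \<subseteq> V \<longrightarrow> card S = j \<longrightarrow> card T = j
      \<longrightarrow> \<bar>lam F S - lam F T\<bar> \<le> 1)"

definition assoc_pair :: "nat \<Rightarrow> nat \<Rightarrow> int \<Rightarrow> int \<Rightarrow> bool" where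
  "assoc_pair v b l e \<longleftrightarrow> 3 * int b = l * int (v choose 2) + e \<and>
     - real v / 2 < real_of_int e \<and> real_of_int e < real v / 2"

definition C1 :: "nat \<Rightarrow> nat \<Rightarrow> bool" where
  "C1 v b \<longleftrightarrow> v mod 3 = 2 \<and> (\<exists>l e. assoc_pair v b l e \<and>
     (int b = \<lfloor>real_of_int l * real v * (real v - 1) / 6\<rfloor> \<or>
      int b = \<lceil>real_of_int l * real v * (real v - 1) / 6\<rceil>) \<and>
     (v mod 6 = 5 \<longrightarrow> l mod 3 \<in> {1, 2}) \<and>
     (v mod 6 = 2 \<longrightarrow> l mod 6 \<in> {2, 4}))"

text \<open>Defect graph (pairs with lambda_xy different from l, labelled by lambda_xy - l)
  isomorphic to G_e.\<close>
definition defect_iso :: "'a set \<Rightarrow> 'a set multiset \<Rightarrow> int \<Rightarrow> int \<Rightarrow> bool" where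
  "defect_iso V F l e \<longleftrightarrow>
    (let s = sgn e; D = {P. P \<subseteq> V \<and> card P = 2 \<and> lam F P \<noteq> l} in
     (\<bar>e\<bar> = 1 \<and> (\<exists>x y z. x \<in> V \<and> y \<in> V \<and> z \<in> V \<and> distinct [x, y, z] \<and>
        D = {{x, y}, {y, z}, {x, z}} \<and>
        lam F {x, y} = l + s \<and> lam F {y, z} = l + s \<and> lam F {x, z} = l - s)) \<or>
     (\<bar>e\<bar> = 2 \<and> (\<exists>a b c d. a \<in> V \<and> b \<in> V \<and> c \<in> V \<and> d \<in> V \<and> distinct [a, b, c, d] \<and>
        D = {{a, b}, {b, c}, {c, d}, {d, a}} \<and>
        lam F {a, b} = l + s \<and> lam F {b, c} = l + s \<and> lam F {c, d} = l + s \<and>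
        lam F {d, a} = l - s)))"

definition nearly_2_balanced :: "'a set \<Rightarrow> 'a set multiset \<Rightarrow> int \<Rightarrow> int \<Rightarrow> bool" where
  "nearly_2_balanced V F l e \<longleftrightarrow>
    (\<forall>P. P \<subseteq> V \<longrightarrow> card P = 2 \<longrightarrow> lam F P \<in> {l - 1, l, l + 1}) \<and> defect_iso V F l e"

definition NWBTS :: "'a set \<Rightarrow> 'a set multiset \<Rightarrow> bool" where
  "NWBTS V F \<longleftrightarrow> TS V F \<and> C1 (card V) (size F) \<and>
     (\<exists>l e. assoc_pair (card V) (size F) l e \<and> nearly_2_balanced V F l e) \<and>
     j_balanced 3 V F"

definition simple_GDD_long :: "int \<Rightarrow> 'a set \<Rightarrow> 'a set \<Rightarrow> 'a set multiset \<Rightarrow> bool" where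
  "simple_GDD_long l V U F \<longleftrightarrow> finite V \<and> U \<subseteq> V \<and>
     (\<forall>B\<in>#F. B \<subseteq> V \<and> card B = 3 \<and> \<not> (\<exists>x y. x \<in> U \<and> y \<in> U \<and> x \<noteq> y \<and> x \<in> B \<and> y \<in> B)) \<and>
     (\<forall>x y. x \<in> V \<longrightarrow> y \<in> V \<longrightarrow> x \<noteq> y \<longrightarrow> \<not> {x, y} \<subseteq> U \<longrightarrow> lam F {x, y} = l) \<and>
     simple_ms F"

end

theory Submission
  imports Defs
begin


lemma lam_nn: "0 \<le> lam X S" by (simp add: lam_def)

lemma lam_plus: "lam (F + G) S = lam F S + lam G S"
  by (simp add: lam_def)

lemma lam_add: "lam (add_mset B F) S = lam F S + (if S \<subseteq> B then 1 else 0)"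
  by (simp add: lam_def)

lemma dbl_count:
  assumes "finite V" "\<forall>B\<in>#F. B \<subseteq> V \<and> card B = 3"
  shows "(\<Sum>P\<in>{P. P \<subseteq> V \<and> card P = 2}. lam F P) = 3 * int (size F)"
  using assms(2)
proof (induction F)
  case empty
  then show ?case by (simp add: lam_def)
next
  case (add B F)
  have B: "B \<subseteq> V" "card B = 3" using add.prems by auto
  have fin: "finite {P. P \<subseteq> V \<and> card P = 2}" using assms(1) by auto
  have "{P. P \<subseteq> V \<and> card P = 2 \<and> P \<subseteq> B} = {P. P \<subseteq> B \<and> card P = 2}" using B by auto
  moreover have "card {P. P \<subseteq> B \<and> card P = 2} = 3"
    using n_subsets[of B 2] B card_ge_0_finite[of B] by (simp add: choose_two)
  ultimately have c3: "card {P \<in> {P. P \<subseteq> V \<and> card P = 2}. P \<subseteq> B} = 3"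
    by (metis (no_types, lifting) Collect_cong mem_Collect_eq)
  have "(\<Sum>P\<in>{P. P \<subseteq> V \<and> card P = 2}. lam (add_mset B F) P)
     = (\<Sum>P\<in>{P. P \<subseteq> V \<and> card P = 2}. lam F P) + (\<Sum>P\<in>{P. P \<subseteq> V \<and> card P = 2}. (if P \<subseteq> B then 1 else 0))"
    by (simp add: lam_add sum.distrib)
  also have "(\<Sum>P\<in>{P. P \<subseteq> V \<and> card P = 2}. (if P \<subseteq> B then 1 else 0 :: int)) = 3"
    using sum.inter_filter[OF fin, of "\<lambda>_. 1::int" "\<lambda>P. P \<subseteq> B"] c3 by simp
  finally show ?case using add by simp
qed

lemma size_sum_count:
  assumes "finite U" "\<forall>B\<in>#F. B \<subseteq> U \<and> card B = 3"
  shows "size F = (\<Sum>T\<in>{T. T \<subseteq> U \<and> card T = 3}. count F T)"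
proof -
  have "size F = (\<Sum>T\<in>set_mset F. count F T)" by (simp add: size_multiset_overloaded_eq)
  also have "\<dots> = (\<Sum>T\<in>{T. T \<subseteq> U \<and> card T = 3}. count F T)"
    apply (rule sum.mono_neutral_left)
    using assms by (auto simp: count_eq_zero_iff)
  finally show ?thesis .
qed

lemma two_choose2_real: "2 * real (n choose 2) = real n * (real n - 1)"
proof -
  have "even (n * (n - 1))" by (cases "even n") auto
  then have "2 * (n choose 2) = n * (n - 1)" by (simp add: choose_two)
  then have "real (2 * (n choose 2)) = real (n * (n - 1))" by metis
  then show ?thesis by (cases n) (auto simp: of_nat_mult algebra_simps)
qed

lemma two_choose2_int: "2 * int (n choose 2) = int n * (int n - 1)"
proof -
  have "real_of_int (2 * int (n choose 2)) = real_of_int (int n * (int n - 1))"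
    using two_choose2_real[of n] by simp
  then show ?thesis by (simp only: of_int_eq_iff)
qed

lemma assoc_bound: "assoc_pair n b l e \<Longrightarrow> - int n < 2 * e \<and> 2 * e < int n"
  unfolding assoc_pair_def by linarith

lemma assoc_unique:
  assumes "assoc_pair n b l e" "assoc_pair n b l' e'" "n \<ge> 3"
  shows "l' = l \<and> e' = e"
proof -
  have b1: "- int n < 2 * e" "2 * e < int n" using assoc_bound[OF assms(1)] by auto
  have b2: "- int n < 2 * e'" "2 * e' < int n" using assoc_bound[OF assms(2)] by auto
  have eq: "(l - l') * int (n choose 2) = e' - e"
    using assms(1,2) unfolding assoc_pair_def by (simp add: algebra_simps)
  have C: "int (n choose 2) \<ge> int n" proof -
    have "int n * (int n - 1) \<ge> int n * 2" using assms(3) by (intro mult_left_mono) auto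
    then show ?thesis using two_choose2_int[of n] by linarith
  qed
  have "l = l'"
  proof (rule ccontr)
    assume "l \<noteq> l'"
    then have "\<bar>l - l'\<bar> \<ge> 1" by simp
    then have "\<bar>(l - l') * int (n choose 2)\<bar> \<ge> int (n choose 2)"
      by (simp add: abs_mult mult_le_cancel_right1)
    then show False using eq C b1 b2 by linarith
  qed
  then show ?thesis using eq by simp
qed

lemma two_points: "card S \<ge> 2 \<Longrightarrow> \<exists>x y. x \<in> S \<and> y \<in> S \<and> x \<noteq> y"
proof -
  assume a: "card S \<ge> 2"
  then have f: "finite S" by (metis card.infinite not_numeral_le_zero)
  then obtain x where x: "x \<in> S" using a by fastforce
  then have "card (S - {x}) \<ge> 1" using a f by simp
  then have "S - {x} \<noteq> {}" by (metis card.empty not_one_le_zero)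
  then obtain y where "y \<in> S - {x}" by blast
  then show ?thesis using x by blast
qed

lemma lam_card3:
  assumes "\<forall>B\<in>#F. card B = 3" "card T = 3"
  shows "lam F T = int (count F T)"
proof -
  have "filter_mset (\<lambda>B. T \<subseteq> B) F = filter_mset (\<lambda>B. B = T) F"
  proof (rule filter_mset_cong[OF refl])
    fix B assume "B \<in># F"
    then have "card B = 3" using assms by auto
    then have "finite B" by (metis card.infinite zero_neq_numeral)
    then show "T \<subseteq> B \<longleftrightarrow> B = T" using assms(2) \<open>card B = 3\<close> card_subset_eq[of B T] by auto
  qed
  then show ?thesis unfolding lam_def by (simp add: filter_eq_replicate_mset)
qed


theorem lemma3p2:
  fixes U V :: "'a set" and F F' :: "'a set multiset" and c :: nat and l e :: int
  assumes "finite V" and "U \<subset> V"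
    and "card V mod 6 = card U mod 6" and "card U mod 6 \<in> {2, 5}"
    and "c < card U choose 3"
    and "C1 (card U) c" and "assoc_pair (card U) c l e"
    and "NWBTS U F" and "size F = c"
    and "simple_GDD_long l V U F'"
  shows "NWBTS V (F + F') \<and>
         3 * int (size (F + F')) = l * int (card V choose 2) + e"
proof -
  note fV = assms(1)
  have UV: "U \<subseteq> V" using assms(2) by auto
  have fU: "finite U" using fV UV finite_subset by auto
  have uv: "card U \<le> card V" using card_mono[OF fV UV] .
  have TSU: "TS U F" and C1U: "C1 (card U) c" and jb: "j_balanced 3 U F"
    using assms(8,9) unfolding NWBTS_def by auto
  obtain l' e' where ap': "assoc_pair (card U) c l' e'" and nb': "nearly_2_balanced U F l' e'"
    using assms(8,9) unfolding NWBTS_def by auto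
  have u3: "card U \<ge> 3" using TSU unfolding TS_def by auto
  have "l' = l \<and> e' = e" using assoc_unique[OF assms(7) ap' u3] .
  then have nb: "nearly_2_balanced U F l e" using nb' by simp
  have FU: "\<forall>B\<in>#F. B \<subseteq> U \<and> card B = 3" using TSU unfolding TS_def by auto
  have G: "\<forall>B\<in>#F'. B \<subseteq> V \<and> card B = 3 \<and> \<not> (\<exists>x y. x \<in> U \<and> y \<in> U \<and> x \<noteq> y \<and> x \<in> B \<and> y \<in> B)"
    and Gl: "\<forall>x y. x \<in> V \<longrightarrow> y \<in> V \<longrightarrow> x \<noteq> y \<longrightarrow> \<not> {x, y} \<subseteq> U \<longrightarrow> lam F' {x, y} = l"
    and Gs: "simple_ms F'"
    using assms(10) unfolding simple_GDD_long_def by auto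
  have G': "\<forall>B\<in>#F'. B \<subseteq> V \<and> card B = 3" using G by auto
  have lamF0: "lam F S = 0" if "\<not> S \<subseteq> U" for S
  proof -
    have "filter_mset (\<lambda>B. S \<subseteq> B) F = {#}" using FU that by (auto simp: filter_mset_eq_mempty_iff)
    then show ?thesis by (simp add: lam_def)
  qed
  have lamG0: "lam F' S = 0" if S1: "S \<subseteq> U" and S2: "card S \<ge> 2" for S
  proof -
    obtain x y where xy: "x \<in> S" "y \<in> S" "x \<noteq> y" using two_points[OF S2] by blast
    have "filter_mset (\<lambda>B. S \<subseteq> B) F' = {#}" using G S1 xy by (fastforce simp: filter_mset_eq_mempty_iff)
    then show ?thesis by (simp add: lam_def)
  qed
  define P2V where "P2V = {P. P \<subseteq> V \<and> card P = 2}"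
  define P2U where "P2U = {P. P \<subseteq> U \<and> card P = 2}"
  have fP2V: "finite P2V" unfolding P2V_def using fV by auto
  have P2sub: "P2U \<subseteq> P2V" unfolding P2U_def P2V_def using UV by auto
  have cV: "card P2V = card V choose 2" unfolding P2V_def using n_subsets[OF fV] .
  have cU: "card P2U = card U choose 2" unfolding P2U_def using n_subsets[OF fU] .
  have "3 * int (size F') = (\<Sum>P\<in>P2V. lam F' P)" using dbl_count[OF fV G'] unfolding P2V_def by simp
  also have "\<dots> = (\<Sum>P\<in>P2U. lam F' P) + (\<Sum>P\<in>P2V - P2U. lam F' P)"
    using sum.subset_diff[OF P2sub fP2V, of "lam F'"] by (simp add: add.commute)
  also have "(\<Sum>P\<in>P2U. lam F' P) = 0" using lamG0 unfolding P2U_def by simp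
  also have "(\<Sum>P\<in>P2V - P2U. lam F' P) = (\<Sum>P\<in>P2V - P2U. l)"
  proof (rule sum.cong[OF refl])
    fix P assume "P \<in> P2V - P2U"
    then have P: "P \<subseteq> V" "card P = 2" "\<not> P \<subseteq> U" unfolding P2V_def P2U_def by auto
    then obtain x y where "P = {x, y}" "x \<noteq> y" using card_2_iff by metis
    then show "lam F' P = l" using Gl P by auto
  qed
  also have "\<dots> = l * int (card P2V - card P2U)"
    using card_Diff_subset[OF finite_subset[OF P2sub fP2V] P2sub] by simp
  finally have sF': "3 * int (size F') = l * (int (card V choose 2) - int (card U choose 2))"
    using cV cU card_mono[OF fP2V P2sub] by (simp add: of_nat_diff)
  have eqU: "3 * int c = l * int (card U choose 2) + e" using assms(7) unfolding assoc_pair_def by simp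
  have sz: "3 * int (size (F + F')) = l * int (card V choose 2) + e"
    using sF' eqU assms(9) by (simp add: algebra_simps)
  have apV: "assoc_pair (card V) (size (F + F')) l e"
    using sz assms(7) uv unfolding assoc_pair_def by auto
  have TSV: "TS V (F + F')" using TSU UV G' fV uv unfolding TS_def by auto
  have C1V: "C1 (card V) (size (F + F'))"
  proof -
    obtain l2 e2 where ap2: "assoc_pair (card U) c l2 e2"
      and fl: "int c = \<lfloor>real_of_int l2 * real (card U) * (real (card U) - 1) / 6\<rfloor> \<or>
               int c = \<lceil>real_of_int l2 * real (card U) * (real (card U) - 1) / 6\<rceil>"
      and m5: "card U mod 6 = 5 \<longrightarrow> l2 mod 3 \<in> {1, 2}"
      and m2: "card U mod 6 = 2 \<longrightarrow> l2 mod 6 \<in> {2, 4}"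
      using C1U unfolding C1_def by blast
    have "l2 = l \<and> e2 = e" using assoc_unique[OF assms(7) ap2 u3] .
    then have l2: "l2 = l" by simp
    have XU: "real_of_int l * real (card U) * (real (card U) - 1) / 6 = real c - real_of_int e / 3"
    proof -
      have "real_of_int (3 * int c) = real_of_int (l * int (card U choose 2) + e)" using eqU by simp
      then have "3 * real c = real_of_int l * real (card U choose 2) + real_of_int e" by simp
      moreover have "real_of_int l * real (card U) * (real (card U) - 1) = real_of_int l * (2 * real (card U choose 2))"
        using two_choose2_real[of "card U"] by simp
      ultimately show ?thesis by (simp add: field_simps)
    qed
    have XV: "real_of_int l * real (card V) * (real (card V) - 1) / 6 = real (size (F + F')) - real_of_int e / 3"
    proof -
      have "real_of_int (3 * int (size (F + F'))) = real_of_int (l * int (card V choose 2) + e)" using sz by simp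
      then have "3 * real (size (F + F')) = real_of_int l * real (card V choose 2) + real_of_int e" by simp
      moreover have "real_of_int l * real (card V) * (real (card V) - 1) = real_of_int l * (2 * real (card V choose 2))"
        using two_choose2_real[of "card V"] by simp
      ultimately show ?thesis by (simp add: field_simps)
    qed
    have ebd: "-3 < e \<and> e < 3"
    proof (cases "int c = \<lfloor>real_of_int l2 * real (card U) * (real (card U) - 1) / 6\<rfloor>")
      case True
      then have "real_of_int (int c) \<le> real c - real_of_int e / 3 \<and> real c - real_of_int e / 3 < real_of_int (int c) + 1"
      proof -
        have "\<lfloor>real c - real_of_int e / 3\<rfloor> = int c" using True XU l2 by simp
        then show ?thesis unfolding floor_eq_iff by simp
      qed
      then show ?thesis by linarith
    next
      case False
      then have "int c = \<lceil>real_of_int l2 * real (card U) * (real (card U) - 1) / 6\<rceil>" using fl by blast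
      then have "real_of_int (int c) - 1 < real c - real_of_int e / 3 \<and> real c - real_of_int e / 3 \<le> real_of_int (int c)"
      proof -
        have "\<lceil>real c - real_of_int e / 3\<rceil> = int c" using \<open>int c = _\<close> XU l2 by simp
        then show ?thesis unfolding ceiling_eq_iff by simp
      qed
      then show ?thesis by linarith
    qed
    have fc: "int (size (F + F')) = \<lfloor>real_of_int l * real (card V) * (real (card V) - 1) / 6\<rfloor> \<or>
              int (size (F + F')) = \<lceil>real_of_int l * real (card V) * (real (card V) - 1) / 6\<rceil>"
    proof (cases "e \<le> 0")
      case True
      have "\<lfloor>real (size (F + F')) - real_of_int e / 3\<rfloor> = int (size (F + F'))"
        unfolding floor_eq_iff using True ebd by simp
      then show ?thesis unfolding XV by (rule disjI1[OF sym])
    next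
      case False
      have "\<lceil>real (size (F + F')) - real_of_int e / 3\<rceil> = int (size (F + F'))"
        unfolding ceiling_eq_iff using False ebd by simp
      then show ?thesis unfolding XV by (rule disjI2[OF sym])
    qed
    have "card V mod 3 = 2" using assms(3,4) by (auto; presburger)
    then show ?thesis unfolding C1_def using apV fc m5 m2 l2 assms(3) by auto
  qed
  have pairU: "lam (F + F') P = lam F P" if "P \<subseteq> U" "card P = 2" for P
    using lamG0[OF that(1)] that(2) by (simp add: lam_plus)
  have pairO: "lam (F + F') P = l" if Q: "P \<subseteq> V" "card P = 2" "\<not> P \<subseteq> U" for P
  proof -
    obtain x y where "P = {x, y}" "x \<noteq> y" using Q(2) card_2_iff by metis
    then have "lam F' P = l" using Gl Q by auto
    then show ?thesis using lamF0[OF Q(3)] by (simp add: lam_plus)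
  qed
  have nbU1: "\<forall>P. P \<subseteq> U \<longrightarrow> card P = 2 \<longrightarrow> lam F P \<in> {l - 1, l, l + 1}"
    and diU: "defect_iso U F l e" using nb unfolding nearly_2_balanced_def by auto
  have nb1: "\<forall>P. P \<subseteq> V \<longrightarrow> card P = 2 \<longrightarrow> lam (F + F') P \<in> {l - 1, l, l + 1}"
  proof (intro allI impI)
    fix P assume "P \<subseteq> V" "card P = 2"
    then show "lam (F + F') P \<in> {l - 1, l, l + 1}"
      using pairU pairO nbU1 by (cases "P \<subseteq> U") auto
  qed
  have Deq: "{P. P \<subseteq> V \<and> card P = 2 \<and> lam (F + F') P \<noteq> l} = {P. P \<subseteq> U \<and> card P = 2 \<and> lam F P \<noteq> l}"
  proof (intro set_eqI iffI)
    fix P assume "P \<in> {P. P \<subseteq> V \<and> card P = 2 \<and> lam (F + F') P \<noteq> l}"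
    then show "P \<in> {P. P \<subseteq> U \<and> card P = 2 \<and> lam F P \<noteq> l}"
      using pairU pairO by (cases "P \<subseteq> U") auto
  next
    fix P assume "P \<in> {P. P \<subseteq> U \<and> card P = 2 \<and> lam F P \<noteq> l}"
    then show "P \<in> {P. P \<subseteq> V \<and> card P = 2 \<and> lam (F + F') P \<noteq> l}"
      using pairU UV by auto
  qed
  have c2: "card {x, y} = 2" if "x \<noteq> y" for x y :: 'a using that by simp
  have diV: "defect_iso V (F + F') l e"
  proof -
    have "(\<bar>e\<bar> = 1 \<and> (\<exists>x y z. x \<in> U \<and> y \<in> U \<and> z \<in> U \<and> distinct [x, y, z] \<and>
        {P. P \<subseteq> U \<and> card P = 2 \<and> lam F P \<noteq> l} = {{x, y}, {y, z}, {x, z}} \<and>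
        lam F {x, y} = l + sgn e \<and> lam F {y, z} = l + sgn e \<and> lam F {x, z} = l - sgn e)) \<or>
     (\<bar>e\<bar> = 2 \<and> (\<exists>a b c d. a \<in> U \<and> b \<in> U \<and> c \<in> U \<and> d \<in> U \<and> distinct [a, b, c, d] \<and>
        {P. P \<subseteq> U \<and> card P = 2 \<and> lam F P \<noteq> l} = {{a, b}, {b, c}, {c, d}, {d, a}} \<and>
        lam F {a, b} = l + sgn e \<and> lam F {b, c} = l + sgn e \<and> lam F {c, d} = l + sgn e \<and>
        lam F {d, a} = l - sgn e))" (is "?A \<or> ?B")
      using diU unfolding defect_iso_def Let_def by simp
    then show ?thesis
    proof
      assume ?A
      then obtain x y z where h: "x \<in> U" "y \<in> U" "z \<in> U" "distinct [x, y, z]"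
        "{P. P \<subseteq> U \<and> card P = 2 \<and> lam F P \<noteq> l} = {{x, y}, {y, z}, {x, z}}"
        "lam F {x, y} = l + sgn e" "lam F {y, z} = l + sgn e" "lam F {x, z} = l - sgn e"
        and e1: "\<bar>e\<bar> = 1" by blast
      have "lam (F + F') {x, y} = lam F {x, y}" "lam (F + F') {y, z} = lam F {y, z}"
           "lam (F + F') {x, z} = lam F {x, z}"
        using pairU h(1-4) c2 by auto
      then have q: "lam (F + F') {x, y} = l + sgn e" "lam (F + F') {y, z} = l + sgn e"
           "lam (F + F') {x, z} = l - sgn e" using h(6-8) by simp_all
      have v: "x \<in> V" "y \<in> V" "z \<in> V" using h(1-3) UV by auto
      show ?thesis unfolding defect_iso_def Let_def Deq
        apply (rule disjI1)
        apply (rule conjI[OF e1])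
        apply (rule exI[of _ x], rule exI[of _ y], rule exI[of _ z])
        using v h(4,5) q by simp
    next
      assume ?B
      then obtain a b c d where h: "a \<in> U" "b \<in> U" "c \<in> U" "d \<in> U" "distinct [a, b, c, d]"
        "{P. P \<subseteq> U \<and> card P = 2 \<and> lam F P \<noteq> l} = {{a, b}, {b, c}, {c, d}, {d, a}}"
        "lam F {a, b} = l + sgn e" "lam F {b, c} = l + sgn e" "lam F {c, d} = l + sgn e"
        "lam F {d, a} = l - sgn e"
        and e2: "\<bar>e\<bar> = 2" by blast
      have "lam (F + F') {a, b} = lam F {a, b}" "lam (F + F') {b, c} = lam F {b, c}"
           "lam (F + F') {c, d} = lam F {c, d}" "lam (F + F') {d, a} = lam F {d, a}"
        using pairU h(1-5) c2 by auto
      then have q: "lam (F + F') {a, b} = l + sgn e" "lam (F + F') {b, c} = l + sgn e"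
           "lam (F + F') {c, d} = l + sgn e" "lam (F + F') {d, a} = l - sgn e" using h(7-10) by simp_all
      have v: "a \<in> V" "b \<in> V" "c \<in> V" "d \<in> V" using h(1-4) UV by auto
      show ?thesis unfolding defect_iso_def Let_def Deq
        apply (rule disjI2)
        apply (rule conjI[OF e2])
        apply (rule exI[of _ a], rule exI[of _ b], rule exI[of _ c], rule exI[of _ d])
        using v h(5,6) q by simp
    qed
  qed
  define P3U where "P3U = {T. T \<subseteq> U \<and> card T = 3}"
  have "\<exists>T0\<in>P3U. count F T0 = 0"
  proof (rule ccontr)
    assume "\<not> ?thesis"
    then have "\<forall>T\<in>P3U. 1 \<le> count F T" by auto
    then have "(\<Sum>T\<in>P3U. (1::nat)) \<le> (\<Sum>T\<in>P3U. count F T)" by (intro sum_mono) auto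
    then have "card P3U \<le> size F" using size_sum_count[OF fU FU] unfolding P3U_def by simp
    moreover have "card P3U = card U choose 3" unfolding P3U_def using n_subsets[OF fU] .
    ultimately show False using assms(5,9) by simp
  qed
  then obtain T0 where T0: "T0 \<subseteq> U" "card T0 = 3" "count F T0 = 0" unfolding P3U_def by auto
  have F3: "\<forall>B\<in>#F. card B = 3" using FU by auto
  have G3: "\<forall>B\<in>#F'. card B = 3" using G by auto
  have lamF1: "lam F T \<le> 1" if "T \<subseteq> U" "card T = 3" for T
  proof -
    have "\<bar>lam F T - lam F T0\<bar> \<le> 1" using jb that T0 unfolding j_balanced_def by blast
    moreover have "lam F T0 = 0" using lam_card3[OF F3 T0(2)] T0(3) by simp
    ultimately show ?thesis by simp
  qed
  have lamG1: "lam F' T \<le> 1" if "card T = 3" for T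
    using lam_card3[OF G3 that] Gs unfolding simple_ms_def by simp
  have r01: "0 \<le> lam (F + F') T \<and> lam (F + F') T \<le> 1" if "T \<subseteq> V" "card T = 3" for T
  proof (cases "T \<subseteq> U")
    case True
    have "card T \<ge> 2" using that(2) by simp
    then show ?thesis using lamF1[OF True that(2)] lamG0[OF True] lam_nn[of F T] by (simp add: lam_plus)
  next
    case False
    then show ?thesis using lamF0[OF False] lamG1[OF that(2)] lam_nn[of F' T] by (simp add: lam_plus)
  qed
  have jbV: "j_balanced 3 V (F + F')"
    unfolding j_balanced_def
  proof (intro allI impI)
    fix S T assume "S \<subseteq> V" "T \<subseteq> V" "card S = 3" "card T = 3"
    then have "0 \<le> lam (F + F') S \<and> lam (F + F') S \<le> 1" "0 \<le> lam (F + F') T \<and> lam (F + F') T \<le> 1"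
      using r01 by blast+
    then show "\<bar>lam (F + F') S - lam (F + F') T\<bar> \<le> 1" by linarith
  qed
  have "NWBTS V (F + F')"
    unfolding NWBTS_def nearly_2_balanced_def using TSV C1V apV nb1 diV jbV by blast
  then show ?thesis using sz by simp
qed

end
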